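(* Let $1/n\ll \nu\ll \lambda\ll 1$. Let $K_{2n+1}$ be 2-factorized. Suppose that $X,V\subseteq V(K_{2n+1})$ are disjoint, $(X,V)$ is $(10\nu n)$-replete and $|X|\leq \lambda n$. Suppose that $C\subseteq C(K_{2n+1})$ is such that every vertex $v\in V(K_{2n+1})$ has at least $3\lambda n$ neighbours in $V$ joined to $v$ by edges with colour in $C$. Then, for any set $C'\subseteq C(K_{2n+1})$ of at most $\nu n$ colours, there is a perfect $(C'\cup C)$-rainbow matching from $X$ to $V$ which uses every colour in $C'$.
   Context: A 2-factorization of $K_{2n+1}$ is an edge-colouring in which every vertex is incident to exactly 2 edges of each colour; $C(K_{2n+1})$ is its colour set. For disjoint $W,Y$, $(W,Y)$ is $\ell$-replete if for every colour at least $\ell$ edges of that colour join $W$ to $Y$. A perfect $D$-rainbow matching from $X$ to $V$ is a matching covering every vertex of $X$, each edge joining $X$ to $V$, with distinct colours all in $D$. $a\ll b$ means the statement holds whenever $a\le b^K/K$ for a suitable fixed absolute constant $K$ per relation; $1/n\ll\cdots$ entails $n$ large. *)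

theory Defs
  imports Main Complex_Main
begin

text \<open>Vertices of K_N are 0..N-1 (N = 2n+1); an edge colouring is a function
  col :: nat => nat => nat, where col u v is the colour of edge uv (u \<noteq> v).\<close>

definition colour_set :: "nat \<Rightarrow> (nat \<Rightarrow> nat \<Rightarrow> nat) \<Rightarrow> nat set" where
  "colour_set N col = {col u v | u v. u < N \<and> v < N \<and> u \<noteq> v}"

definition two_factorization :: "nat \<Rightarrow> (nat \<Rightarrow> nat \<Rightarrow> nat) \<Rightarrow> bool" where
  "two_factorization N col \<longleftrightarrow>
     (\<forall>u<N. \<forall>v<N. u \<noteq> v \<longrightarrow> col u v = col v u) \<and>
     (\<forall>v<N. \<forall>c\<in>colour_set N col. card {u. u < N \<and> u \<noteq> v \<and> col v u = c} = 2)"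

text \<open>(W,Y) is l-replete: every colour has at least l edges joining W to Y
  (W, Y disjoint, so edges correspond to ordered pairs (w,y) with w in W, y in Y).\<close>
definition replete :: "nat \<Rightarrow> (nat \<Rightarrow> nat \<Rightarrow> nat) \<Rightarrow> real \<Rightarrow> nat set \<Rightarrow> nat set \<Rightarrow> bool" where
  "replete N col l W Y \<longleftrightarrow>
     (\<forall>c\<in>colour_set N col. real (card {(w, y). w \<in> W \<and> y \<in> Y \<and> col w y = c}) \<ge> l)"

definition perfect_rainbow_matching ::
  "(nat \<Rightarrow> nat \<Rightarrow> nat) \<Rightarrow> nat set \<Rightarrow> nat set \<Rightarrow> nat set \<Rightarrow> (nat \<times> nat) set \<Rightarrow> bool" where
  "perfect_rainbow_matching col D X V M \<longleftrightarrow>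
     M \<subseteq> X \<times> V \<and>
     (\<forall>x\<in>X. \<exists>!y. (x, y) \<in> M) \<and>
     (\<forall>y\<in>V. \<forall>x1 x2. (x1, y) \<in> M \<longrightarrow> (x2, y) \<in> M \<longrightarrow> x1 = x2) \<and>
     inj_on (\<lambda>(x, y). col x y) M \<and>
     (\<lambda>(x, y). col x y) ` M \<subseteq> D"

end

theory Submission
  imports Defs
begin

definition pm :: "(nat \<Rightarrow> nat \<Rightarrow> nat) \<Rightarrow> nat set \<Rightarrow> nat set \<Rightarrow> nat set \<Rightarrow> (nat \<times> nat) set \<Rightarrow> bool" where
  "pm col D X V M \<longleftrightarrow> finite M \<and> M \<subseteq> X \<times> V \<and>
     (\<forall>x y1 y2. (x, y1) \<in> M \<longrightarrow> (x, y2) \<in> M \<longrightarrow> y1 = y2) \<and>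
     (\<forall>x1 x2 y. (x1, y) \<in> M \<longrightarrow> (x2, y) \<in> M \<longrightarrow> x1 = x2) \<and>
     inj_on (\<lambda>(x, y). col x y) M \<and> (\<lambda>(x, y). col x y) ` M \<subseteq> D"

lemma pmD:
  assumes "pm col D X V M"
  shows "finite M" "M \<subseteq> X \<times> V"
     "\<forall>x y1 y2. (x, y1) \<in> M \<longrightarrow> (x, y2) \<in> M \<longrightarrow> y1 = y2"
     "\<forall>x1 x2 y. (x1, y) \<in> M \<longrightarrow> (x2, y) \<in> M \<longrightarrow> x1 = x2"
     "inj_on (\<lambda>(x, y). col x y) M" "(\<lambda>(x, y). col x y) ` M \<subseteq> D"
  using assms unfolding pm_def by - (elim conjE, assumption)+

lemma pmI:
  assumes "finite M" "M \<subseteq> X \<times> V"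
     "\<forall>x y1 y2. (x, y1) \<in> M \<longrightarrow> (x, y2) \<in> M \<longrightarrow> y1 = y2"
     "\<forall>x1 x2 y. (x1, y) \<in> M \<longrightarrow> (x2, y) \<in> M \<longrightarrow> x1 = x2"
     "inj_on (\<lambda>(x, y). col x y) M" "(\<lambda>(x, y). col x y) ` M \<subseteq> D"
  shows "pm col D X V M"
  using assms unfolding pm_def by (intro conjI)

lemma deg2:
  assumes "two_factorization N col" "w < N" "c \<in> colour_set N col"
  shows "card {u. u < N \<and> u \<noteq> w \<and> col w u = c} = 2"
  using assms unfolding two_factorization_def by blast

lemma stage1:
  assumes tf: "two_factorization N col" and XN: "X \<subseteq> {..<N}" and VN: "V \<subseteq> {..<N}"
    and disj: "X \<inter> V = {}"
    and rep: "\<forall>c\<in>C'. 4 * card C' \<le> card {(w, y). w \<in> X \<and> y \<in> V \<and> col w y = c}"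
    and CC: "C' \<subseteq> colour_set N col" and fC: "finite C'"
  shows "\<exists>M. pm col C' X V M \<and> (\<lambda>(x, y). col x y) ` M = C'"
proof -
  have fX: "finite X" using XN finite_subset by blast
  have fV: "finite V" using VN finite_subset by blast
  have sym: "\<And>u v. u < N \<Longrightarrow> v < N \<Longrightarrow> u \<noteq> v \<Longrightarrow> col u v = col v u"
    using tf unfolding two_factorization_def by blast
  have "\<exists>M. pm col F X V M \<and> (\<lambda>(x, y). col x y) ` M = F \<and> card M = card F" if "F \<subseteq> C'" for F
  proof -
    have "finite F" using that fC finite_subset by blast
    then show ?thesis using that
    proof (induction F rule: finite_subset_induct')
      case empty
      show ?case by (rule exI[of _ "{}"]) (simp add: pm_def)
    next
      case (insert c F)
      obtain M where M: "pm col F X V M" "(\<lambda>(x, y). col x y) ` M = F" "card M = card F"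
        using insert.IH by blast
      have fM: "finite M" using pmD(1)[OF M(1)] .
      have MXV: "M \<subseteq> X \<times> V" using pmD(2)[OF M(1)] .
      have cC: "c \<in> colour_set N col" using insert.hyps(2) CC by blast
      define E where "E = {(w, y). w \<in> X \<and> y \<in> V \<and> col w y = c}"
      have fE: "finite E" unfolding E_def
        by (rule finite_subset[of _ "X \<times> V"]) (use fX fV in auto)
      define B1 where "B1 = {p \<in> E. fst p \<in> fst ` M}"
      define B2 where "B2 = {p \<in> E. snd p \<in> snd ` M}"
      have "B1 \<subseteq> (\<Union>w\<in>fst ` M. {w} \<times> {u. u < N \<and> u \<noteq> w \<and> col w u = c})"
      proof
        fix p assume p: "p \<in> B1"
        obtain w y where wy: "p = (w, y)" by fastforce
        have "w \<in> X" "y \<in> V" "col w y = c" "w \<in> fst ` M" using p unfolding B1_def E_def wy by auto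
        moreover have "y < N" "w \<noteq> y" using VN disj calculation by auto
        ultimately show "p \<in> (\<Union>w\<in>fst ` M. {w} \<times> {u. u < N \<and> u \<noteq> w \<and> col w u = c})"
          using wy by auto
      qed
      hence "card B1 \<le> card (\<Union>w\<in>fst ` M. {w} \<times> {u. u < N \<and> u \<noteq> w \<and> col w u = c})"
        by (intro card_mono) (use fM in auto)
      also have "\<dots> \<le> (\<Sum>w\<in>fst ` M. card ({w} \<times> {u. u < N \<and> u \<noteq> w \<and> col w u = c}))"
        by (rule card_UN_le) (use fM in simp)
      also have "\<dots> = (\<Sum>w\<in>fst ` M. 2)"
      proof (rule sum.cong)
        fix w assume "w \<in> fst ` M"
        hence "w < N" using MXV XN by auto
        thus "card ({w} \<times> {u. u < N \<and> u \<noteq> w \<and> col w u = c}) = 2"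
          using deg2[OF tf _ cC] by (simp add: card_cartesian_product)
      qed simp
      also have "\<dots> \<le> 2 * card M" using card_image_le[OF fM, of fst] by simp
      finally have c1: "card B1 \<le> 2 * card M" .
      have "B2 \<subseteq> (\<Union>y\<in>snd ` M. {u. u < N \<and> u \<noteq> y \<and> col y u = c} \<times> {y})"
      proof
        fix p assume p: "p \<in> B2"
        obtain w y where wy: "p = (w, y)" by fastforce
        have "w \<in> X" "y \<in> V" "col w y = c" "y \<in> snd ` M" using p unfolding B2_def E_def wy by auto
        moreover have "w < N" "y < N" "w \<noteq> y" using XN VN disj calculation by auto
        ultimately show "p \<in> (\<Union>y\<in>snd ` M. {u. u < N \<and> u \<noteq> y \<and> col y u = c} \<times> {y})"
          using sym[of w y] wy by auto
      qed
      hence "card B2 \<le> card (\<Union>y\<in>snd ` M. {u. u < N \<and> u \<noteq> y \<and> col y u = c} \<times> {y})"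
        by (intro card_mono) (use fM in auto)
      also have "\<dots> \<le> (\<Sum>y\<in>snd ` M. card ({u. u < N \<and> u \<noteq> y \<and> col y u = c} \<times> {y}))"
        by (rule card_UN_le) (use fM in simp)
      also have "\<dots> = (\<Sum>y\<in>snd ` M. 2)"
      proof (rule sum.cong)
        fix y assume "y \<in> snd ` M"
        hence "y < N" using MXV VN by auto
        thus "card ({u. u < N \<and> u \<noteq> y \<and> col y u = c} \<times> {y}) = 2"
          using deg2[OF tf _ cC] by (simp add: card_cartesian_product)
      qed simp
      also have "\<dots> \<le> 2 * card M" using card_image_le[OF fM, of snd] by simp
      finally have c2: "card B2 \<le> 2 * card M" .
      have "card (insert c F) \<le> card C'" using insert.hyps fC by (meson card_mono insert_subset)
      hence "card F + 1 \<le> card C'" using insert.hyps by simp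
      moreover have "4 * card C' \<le> card E" using rep insert.hyps(2) unfolding E_def by blast
      ultimately have "card (B1 \<union> B2) < card E"
        using c1 c2 M(3) card_Un_le[of B1 B2] by linarith
      have "\<not> E \<subseteq> B1 \<union> B2"
      proof
        assume "E \<subseteq> B1 \<union> B2"
        moreover have "finite (B1 \<union> B2)" using fE unfolding B1_def B2_def by auto
        ultimately have "card E \<le> card (B1 \<union> B2)" by (rule card_mono[rotated])
        thus False using \<open>card (B1 \<union> B2) < card E\<close> by linarith
      qed
      then obtain w y where wy: "(w, y) \<in> E" "(w, y) \<notin> B1" "(w, y) \<notin> B2" by auto
      have w: "w \<in> X" "y \<in> V" "col w y = c" using wy(1) unfolding E_def by auto
      have nw: "w \<notin> fst ` M" and ny: "y \<notin> snd ` M" using wy unfolding B1_def B2_def by auto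
      have notin: "(w, y) \<notin> M" using nw by force
      have cF: "c \<notin> (\<lambda>(x, y). col x y) ` M" using M(2) insert.hyps by simp
      show ?case
      proof (rule exI[of _ "insert (w, y) M"], intro conjI)
        show "pm col (insert c F) X V (insert (w, y) M)"
        proof -
          note a = pmD[OF M(1)]
          have nw': "\<And>z. (w, z) \<notin> M" using nw by force
          have ny': "\<And>z. (z, y) \<notin> M" using ny by force
          have b: "\<forall>x y1 y2. (x, y1) \<in> insert (w, y) M \<longrightarrow> (x, y2) \<in> insert (w, y) M \<longrightarrow> y1 = y2"
            using a(3) nw' by blast
          have c: "\<forall>x1 x2 y'. (x1, y') \<in> insert (w, y) M \<longrightarrow> (x2, y') \<in> insert (w, y) M \<longrightarrow> x1 = x2"
            using a(4) ny' by blast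
          have d: "inj_on (\<lambda>(x, y). col x y) (insert (w, y) M)"
            using a(5) cF w(3) notin by (simp add: inj_on_insert)
          have e: "(\<lambda>(x, y). col x y) ` insert (w, y) M \<subseteq> insert c F" using M(2) w(3) by auto
          have "insert (w, y) M \<subseteq> X \<times> V" using a(2) w(1,2) by blast
          moreover have "finite (insert (w, y) M)" using a(1) by simp
          ultimately show ?thesis using b c d e by (intro pmI)
        qed
        show "(\<lambda>(x, y). col x y) ` insert (w, y) M = insert c F" using M(2) w by simp
        show "card (insert (w, y) M) = card (insert c F)"
          using M(3) notin fM insert.hyps by simp
      qed
    qed
  qed
  thus ?thesis by blast
qed

lemma stage2:
  assumes tf: "two_factorization N col" and XN: "X \<subseteq> {..<N}" and VN: "V \<subseteq> {..<N}"
    and disj: "X \<inter> V = {}"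
    and M0: "pm col D X V M0"
    and dg: "\<forall>x\<in>X. 3 * card X \<le> card {u \<in> V. u \<noteq> x \<and> col x u \<in> C}"
  shows "\<exists>M. pm col (D \<union> C) X V M \<and> M0 \<subseteq> M \<and> X \<subseteq> fst ` M"
proof -
  have fX: "finite X" using XN finite_subset by blast
  have fV: "finite V" using VN finite_subset by blast
  have "\<exists>M. pm col (D \<union> C) X V M \<and> M0 \<subseteq> M \<and> T \<subseteq> fst ` M" if "T \<subseteq> X" for T
  proof -
    have "finite T" using that fX finite_subset by blast
    then show ?thesis using that
    proof (induction T rule: finite_subset_induct')
      case empty
      show ?case using pmD[OF M0] by (intro exI[of _ M0] conjI pmI) auto
    next
      case (insert x T)
      obtain M where M: "pm col (D \<union> C) X V M" "M0 \<subseteq> M" "T \<subseteq> fst ` M"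
        using insert.IH by blast
      show ?case
      proof (cases "x \<in> fst ` M")
        case True
        then show ?thesis using M by blast
      next
        case False
        note a = pmD[OF M(1)]
        have xX: "x \<in> X" "x < N" using insert.hyps XN by auto
        have injf: "inj_on fst M"
        proof (rule inj_onI)
          fix p q assume pq: "p \<in> M" "q \<in> M" "fst p = fst q"
          obtain p1 p2 q1 q2 where "p = (p1, p2)" "q = (q1, q2)" by fastforce
          thus "p = q" using pq a(3)[rule_format, of p1 p2 q2] by auto
        qed
        have "card M = card (fst ` M)" using card_image[OF injf] by simp
        also have "\<dots> \<le> card (X - {x})"
          by (rule card_mono) (use fX a(2) False in auto)
        moreover have "card (X - {x}) = card X - 1" using xX(1) fX by simp
        moreover have "card X \<ge> 1" using xX(1) fX by (metis One_nat_def Suc_leI card_gt_0_iff empty_iff)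
        ultimately have cM: "card M + 1 \<le> card X" by linarith
        define A where "A = {u \<in> V. u \<noteq> x \<and> col x u \<in> C}"
        have fA: "finite A" unfolding A_def using fV by auto
        define B1 where "B1 = {u \<in> A. u \<in> snd ` M}"
        define B2 where "B2 = {u \<in> A. col x u \<in> (\<lambda>(x, y). col x y) ` M}"
        have "card B1 \<le> card (snd ` M)" unfolding B1_def by (rule card_mono) (use a(1) in auto)
        also have "\<dots> \<le> card M" using card_image_le[OF a(1)] by simp
        finally have c1: "card B1 \<le> card M" .
        have "B2 \<subseteq> (\<Union>c\<in>(\<lambda>(x, y). col x y) ` M. {u. u < N \<and> u \<noteq> x \<and> col x u = c})"
          unfolding B2_def A_def using VN by auto
        hence "card B2 \<le> card (\<Union>c\<in>(\<lambda>(x, y). col x y) ` M. {u. u < N \<and> u \<noteq> x \<and> col x u = c})"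
          by (intro card_mono) (use a(1) in auto)
        also have "\<dots> \<le> (\<Sum>c\<in>(\<lambda>(x, y). col x y) ` M. card {u. u < N \<and> u \<noteq> x \<and> col x u = c})"
          by (rule card_UN_le) (use a(1) in simp)
        also have "\<dots> = (\<Sum>c\<in>(\<lambda>(x, y). col x y) ` M. 2)"
        proof (rule sum.cong)
          fix c assume "c \<in> (\<lambda>(x, y). col x y) ` M"
          then obtain w y where "(w, y) \<in> M" "c = col w y" by auto
          hence "w \<in> X" "y \<in> V" using a(2) by auto
          hence "w < N" "y < N" "w \<noteq> y" using XN VN disj by auto
          hence "c \<in> colour_set N col" using \<open>c = col w y\<close>
            unfolding colour_set_def by blast
          thus "card {u. u < N \<and> u \<noteq> x \<and> col x u = c} = 2"
            using deg2[OF tf xX(2)] by simp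
        qed simp
        also have "\<dots> \<le> 2 * card M" using card_image_le[OF a(1), of "\<lambda>(x, y). col x y"] by simp
        finally have c2: "card B2 \<le> 2 * card M" .
        have "3 * card X \<le> card A" using dg xX unfolding A_def by blast
        hence lt: "card (B1 \<union> B2) < card A" using c1 c2 cM card_Un_le[of B1 B2] by linarith
        have "\<not> A \<subseteq> B1 \<union> B2"
        proof
          assume "A \<subseteq> B1 \<union> B2"
          moreover have "finite (B1 \<union> B2)" using fA unfolding B1_def B2_def by auto
          ultimately have "card A \<le> card (B1 \<union> B2)" by (rule card_mono[rotated])
          thus False using lt by linarith
        qed
        then obtain u where u: "u \<in> A" "u \<notin> B1" "u \<notin> B2" by auto
        have uu: "u \<in> V" "col x u \<in> C" "u \<notin> snd ` M" "col x u \<notin> (\<lambda>(x, y). col x y) ` M"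
          using u unfolding A_def B1_def B2_def by auto
        have notin: "(x, u) \<notin> M" using False by force
        have nx': "\<And>z. (x, z) \<notin> M" using False by force
        have nu': "\<And>z. (z, u) \<notin> M" using uu(3) by force
        have b: "\<forall>x' y1 y2. (x', y1) \<in> insert (x, u) M \<longrightarrow> (x', y2) \<in> insert (x, u) M \<longrightarrow> y1 = y2"
          using a(3) nx' by blast
        have c: "\<forall>x1 x2 y'. (x1, y') \<in> insert (x, u) M \<longrightarrow> (x2, y') \<in> insert (x, u) M \<longrightarrow> x1 = x2"
          using a(4) nu' by blast
        have d: "inj_on (\<lambda>(x, y). col x y) (insert (x, u) M)"
          using a(5) uu(4) notin by (simp add: inj_on_insert)
        have e: "(\<lambda>(x, y). col x y) ` insert (x, u) M \<subseteq> D \<union> C" using a(6) uu(2) by auto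
        have "insert (x, u) M \<subseteq> X \<times> V" using a(2) xX(1) uu(1) by blast
        moreover have "finite (insert (x, u) M)" using a(1) by simp
        ultimately have "pm col (D \<union> C) X V (insert (x, u) M)" using b c d e by (intro pmI)
        moreover have "insert x T \<subseteq> fst ` insert (x, u) M" using M(3) by auto
        ultimately show ?thesis using M(2) by blast
      qed
    qed
  qed
  thus ?thesis by blast
qed

theorem lemma4p4:
  shows "\<exists>K1 K2 K3 :: real. K1 > 0 \<and> K2 > 0 \<and> K3 > 0 \<and>
    (\<forall>(n::nat) (\<nu>::real) (lam::real) (col :: nat \<Rightarrow> nat \<Rightarrow> nat)
        (X :: nat set) (V :: nat set) (C :: nat set) (C' :: nat set).
      0 < n \<and> 0 < \<nu> \<and> 0 < lam \<and>
      1 / real n \<le> \<nu> powr K1 / K1 \<and>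
      \<nu> \<le> lam powr K2 / K2 \<and>
      lam \<le> 1 / K3 \<and>
      two_factorization (2*n+1) col \<and>
      X \<subseteq> {..<2*n+1} \<and> V \<subseteq> {..<2*n+1} \<and> X \<inter> V = {} \<and>
      replete (2*n+1) col (10 * \<nu> * real n) X V \<and>
      real (card X) \<le> lam * real n \<and>
      C \<subseteq> colour_set (2*n+1) col \<and>
      (\<forall>v<2*n+1. real (card {u \<in> V. u \<noteq> v \<and> col v u \<in> C}) \<ge> 3 * lam * real n) \<and>
      C' \<subseteq> colour_set (2*n+1) col \<and> real (card C') \<le> \<nu> * real n
      \<longrightarrow> (\<exists>M. perfect_rainbow_matching col (C' \<union> C) X V M \<and>
                C' \<subseteq> (\<lambda>(x, y). col x y) ` M))"
proof (rule exI[of _ 1], rule exI[of _ 1], rule exI[of _ 1], intro conjI, simp, simp, simp, intro allI impI)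
  fix n :: nat and \<nu> lam :: real and col and X V C C' :: "nat set"
  assume h: "0 < n \<and> 0 < \<nu> \<and> 0 < lam \<and>
      1 / real n \<le> \<nu> powr 1 / 1 \<and>
      \<nu> \<le> lam powr 1 / 1 \<and>
      lam \<le> 1 / 1 \<and>
      two_factorization (2*n+1) col \<and>
      X \<subseteq> {..<2*n+1} \<and> V \<subseteq> {..<2*n+1} \<and> X \<inter> V = {} \<and>
      replete (2*n+1) col (10 * \<nu> * real n) X V \<and>
      real (card X) \<le> lam * real n \<and>
      C \<subseteq> colour_set (2*n+1) col \<and>
      (\<forall>v<2*n+1. real (card {u \<in> V. u \<noteq> v \<and> col v u \<in> C}) \<ge> 3 * lam * real n) \<and>
      C' \<subseteq> colour_set (2*n+1) col \<and> real (card C') \<le> \<nu> * real n"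
  define N where "N = 2*n+1"
  have tf: "two_factorization N col" and XN: "X \<subseteq> {..<N}" and VN: "V \<subseteq> {..<N}"
    and disj: "X \<inter> V = {}" and CC: "C' \<subseteq> colour_set N col"
    using h unfolding N_def by blast+
  have fcs: "finite (colour_set N col)"
  proof -
    have "colour_set N col \<subseteq> (\<lambda>(u, v). col u v) ` ({..<N} \<times> {..<N})"
      unfolding colour_set_def by auto
    thus ?thesis by (rule finite_subset) simp
  qed
  have fC: "finite C'" using CC fcs finite_subset by blast
  have rep: "\<forall>c\<in>C'. 4 * card C' \<le> card {(w, y). w \<in> X \<and> y \<in> V \<and> col w y = c}"
  proof
    fix c assume "c \<in> C'"
    hence "c \<in> colour_set N col" using CC by blast
    hence "10 * \<nu> * real n \<le> real (card {(w, y). w \<in> X \<and> y \<in> V \<and> col w y = c})"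
      using h unfolding replete_def N_def by blast
    moreover have "real (card C') \<le> \<nu> * real n" using h by blast
    moreover have "0 \<le> \<nu> * real n" using h by simp
    ultimately have "real (4 * card C') \<le> real (card {(w, y). w \<in> X \<and> y \<in> V \<and> col w y = c})"
      by simp
    thus "4 * card C' \<le> card {(w, y). w \<in> X \<and> y \<in> V \<and> col w y = c}" by linarith
  qed
  obtain M0 where M0: "pm col C' X V M0" "(\<lambda>(x, y). col x y) ` M0 = C'"
    using stage1[OF tf XN VN disj rep CC fC] by blast
  have dg: "\<forall>x\<in>X. 3 * card X \<le> card {u \<in> V. u \<noteq> x \<and> col x u \<in> C}"
  proof
    fix x assume "x \<in> X"
    hence "x < 2*n+1" using XN N_def by auto
    hence "real (card {u \<in> V. u \<noteq> x \<and> col x u \<in> C}) \<ge> 3 * lam * real n" using h by blast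
    moreover have "real (card X) \<le> lam * real n" using h by blast
    ultimately have "real (3 * card X) \<le> real (card {u \<in> V. u \<noteq> x \<and> col x u \<in> C})" by simp
    thus "3 * card X \<le> card {u \<in> V. u \<noteq> x \<and> col x u \<in> C}" by linarith
  qed
  obtain M where M: "pm col (C' \<union> C) X V M" "M0 \<subseteq> M" "X \<subseteq> fst ` M"
    using stage2[OF tf XN VN disj M0(1) dg] by blast
  note a0 = pmD[OF M(1)]
  note a = a0(2-6)
  have ex: "\<forall>x\<in>X. \<exists>!y. (x, y) \<in> M"
  proof
    fix x assume "x \<in> X"
    then obtain y where "(x, y) \<in> M" using M(3) by force
    thus "\<exists>!y. (x, y) \<in> M" using a(2) by blast
  qed
  have "perfect_rainbow_matching col (C' \<union> C) X V M"
    unfolding perfect_rainbow_matching_def using a ex by blast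
  moreover have "C' \<subseteq> (\<lambda>(x, y). col x y) ` M" using M0(2) M(2) by blast
  ultimately show "\<exists>M. perfect_rainbow_matching col (C' \<union> C) X V M \<and>
                C' \<subseteq> (\<lambda>(x, y). col x y) ` M" by blast
qed

end
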